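(* Let $X$ be a real Hilbert space, let $A\colon X\rightrightarrows X$ with $\operatorname{dom}A\ne\varnothing$, let $\rho\in\,]-1,+\infty[$, set $D=\operatorname{ran}(\mathrm{Id}+A)$, $T=J_A$ (i.e., $A=T^{-1}-\mathrm{Id}$), and $\alpha=\tfrac{1}{2(\rho+1)}$. Then: (i) $A$ is $\rho$-comonotone $\iff$ $T$ is $\tfrac{1}{2(\rho+1)}$-conically nonexpansive. (ii) $A$ is maximally $\rho$-comonotone $\iff$ [$T$ is $\alpha$-conically nonexpansive and $D=X$]. (iii) $A$ is $(-\tfrac12)$-comonotone $\iff$ $T$ is nonexpansive. (iv) $A$ is maximally $(-\tfrac12)$-comonotone $\iff$ [$T$ is nonexpansive and $D=X$]. (v) [$A$ is $\rho$-comonotone and $\rho>-\tfrac12$] $\iff$ $T$ is $\alpha$-averaged. (vi) [$A$ is maximally $\rho$-comonotone and $\rho>-\tfrac12$] $\iff$ [$T$ is $\alpha$-averaged and $D=X$].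
   Context: $J_A=(\mathrm{Id}+A)^{-1}$ with domain $D$. An operator $N$ with domain $D$ is nonexpansive if it is single-valued and $\|Nx-Ny\|\le\|x-y\|$ for all $x,y\in D$. For $\alpha>0$, $T$ is $\alpha$-conically nonexpansive if $T=(1-\alpha)\mathrm{Id}+\alpha N$ for some nonexpansive $N\colon D\to X$; $T$ is $\alpha$-averaged if this holds with $\alpha\in]0,1[$. For $\rho\in\mathbb R$, $A$ is $\rho$-comonotone if $\langle x-y,u-v\rangle\ge\rho\|u-v\|^2$ for all $(x,u),(y,v)\in\operatorname{gra}A$; maximally $\rho$-comonotone if moreover no $\rho$-comonotone operator has a graph properly containing $\operatorname{gra}A$. *)

theory Defs
  imports "HOL-Analysis.Analysis"
begin

text \<open>Set-valued operators A : X \<rightrightarrows> X are represented by their graphs ('a \<times> 'a) set.\<close>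

definition comonotone :: "real \<Rightarrow> ('a::real_inner \<times> 'a) set \<Rightarrow> bool" where
  "comonotone \<rho> A \<longleftrightarrow>
     (\<forall>x u y v. (x, u) \<in> A \<longrightarrow> (y, v) \<in> A \<longrightarrow> inner (x - y) (u - v) \<ge> \<rho> * (norm (u - v))\<^sup>2)"

definition max_comonotone :: "real \<Rightarrow> ('a::real_inner \<times> 'a) set \<Rightarrow> bool" where
  "max_comonotone \<rho> A \<longleftrightarrow> comonotone \<rho> A \<and> (\<forall>B. comonotone \<rho> B \<and> A \<subseteq> B \<longrightarrow> B = A)"

definition resolvent :: "('a::real_vector \<times> 'a) set \<Rightarrow> ('a \<times> 'a) set" where
  "resolvent A = {(x + u, x) | x u. (x, u) \<in> A}"

definition ran_id_plus :: "('a::real_vector \<times> 'a) set \<Rightarrow> 'a set" where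
  "ran_id_plus A = {x + u | x u. (x, u) \<in> A}"

definition nonexpansive_on :: "'a set \<Rightarrow> ('a::real_normed_vector \<Rightarrow> 'a) \<Rightarrow> bool" where
  "nonexpansive_on D N \<longleftrightarrow> (\<forall>x\<in>D. \<forall>y\<in>D. norm (N x - N y) \<le> norm (x - y))"

definition nonexpansive_op :: "'a set \<Rightarrow> ('a::real_normed_vector \<times> 'a) set \<Rightarrow> bool" where
  "nonexpansive_op D T \<longleftrightarrow> (\<exists>N. nonexpansive_on D N \<and> T = {(x, N x) | x. x \<in> D})"

definition conically_nonexpansive :: "real \<Rightarrow> 'a set \<Rightarrow> ('a::real_normed_vector \<times> 'a) set \<Rightarrow> bool" where
  "conically_nonexpansive \<alpha> D T \<longleftrightarrow> \<alpha> > 0 \<and>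
     (\<exists>N. nonexpansive_on D N \<and> T = {(x, (1 - \<alpha>) *\<^sub>R x + \<alpha> *\<^sub>R N x) | x. x \<in> D})"

definition averaged :: "real \<Rightarrow> 'a set \<Rightarrow> ('a::real_normed_vector \<times> 'a) set \<Rightarrow> bool" where
  "averaged \<alpha> D T \<longleftrightarrow> 0 < \<alpha> \<and> \<alpha> < 1 \<and> conically_nonexpansive \<alpha> D T"

end

theory Submission
  imports Defs
begin

lemma pair_key:
  fixes a b :: "'a::real_inner"
  assumes "\<rho> > -1"
  shows "(\<rho> * (norm b)\<^sup>2 \<le> inner a b) \<longleftrightarrow> norm (a - (2*\<rho>+1) *\<^sub>R b) \<le> norm (a + b)"
proof -
  have e: "inner (a + b) (a + b) - inner (a - (2*\<rho>+1) *\<^sub>R b) (a - (2*\<rho>+1) *\<^sub>R b)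
      = 2*(2*\<rho>+2) * (inner a b - \<rho> * (norm b)\<^sup>2)"
    by (simp add: inner_add_left inner_add_right inner_diff_left inner_diff_right inner_commute
        power2_norm_eq_inner algebra_simps)
  have "norm (a - (2*\<rho>+1) *\<^sub>R b) \<le> norm (a + b) \<longleftrightarrow> 0 \<le> 2*(2*\<rho>+2) * (inner a b - \<rho> * (norm b)\<^sup>2)"
    unfolding norm_le using e by linarith
  also have "\<dots> \<longleftrightarrow> 0 \<le> inner a b - \<rho> * (norm b)\<^sup>2"
    using assms by (simp add: zero_le_mult_iff)
  finally show ?thesis by linarith
qed

lemma uniq:
  fixes A :: "('a::real_inner \<times> 'a) set"
  assumes "comonotone \<rho> A" "\<rho> > -1" "(x,u) \<in> A" "(y,v) \<in> A" "x + u = y + v"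
  shows "x = y \<and> u = v"
proof -
  have "\<rho> * (norm (u - v))\<^sup>2 \<le> inner (x - y) (u - v)" using assms unfolding comonotone_def by blast
  moreover have "x - y = -(u - v)" using assms(5) by (simp add: algebra_simps)
  moreover have "inner (x - y) (u - v) = - (norm (u-v))\<^sup>2"
    unfolding \<open>x - y = -(u - v)\<close> by (simp only: inner_minus_left power2_norm_eq_inner)
  ultimately have "\<rho> * (norm (u - v))\<^sup>2 \<le> - (norm (u-v))\<^sup>2" by simp
  hence "(\<rho> + 1) * (norm (u - v))\<^sup>2 \<le> 0" by (simp add: algebra_simps)
  hence "(norm (u - v))\<^sup>2 \<le> 0" using assms(2) by (simp add: mult_le_0_iff)
  hence "u = v" by simp
  thus ?thesis using assms(5) by simp
qed

lemma comon_N: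
  fixes A :: "('a::real_inner \<times> 'a) set"
  assumes "comonotone \<rho> A" "\<rho> > -1"
  shows "\<exists>N. nonexpansive_on (ran_id_plus A) N \<and> (\<forall>x u. (x,u) \<in> A \<longrightarrow> N (x + u) = x - (2*\<rho>+1) *\<^sub>R u)"
proof -
  define J where "J y = (SOME p. p \<in> A \<and> fst p + snd p = y)" for y
  have J: "J (x + u) = (x, u)" if "(x,u) \<in> A" for x u
  proof -
    have "J (x+u) \<in> A \<and> fst (J (x+u)) + snd (J (x+u)) = x + u"
      unfolding J_def by (rule someI[of _ "(x,u)"]) (use that in auto)
    thus ?thesis using uniq[OF assms, of "fst (J (x+u))" "snd (J (x+u))" x u] that
      by (metis prod.collapse)
  qed
  define N where "N y = fst (J y) - (2*\<rho>+1) *\<^sub>R snd (J y)" for y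
  have NA: "N (x + u) = x - (2*\<rho>+1) *\<^sub>R u" if "(x,u) \<in> A" for x u
    using J[OF that] unfolding N_def by simp
  have "nonexpansive_on (ran_id_plus A) N"
    unfolding nonexpansive_on_def ran_id_plus_def
  proof clarify
    fix x u y v assume xu: "(x,u) \<in> A" and yv: "(y,v) \<in> A"
    have "\<rho> * (norm (u - v))\<^sup>2 \<le> inner (x - y) (u - v)" using assms xu yv unfolding comonotone_def by blast
    hence "norm ((x - y) - (2*\<rho>+1) *\<^sub>R (u - v)) \<le> norm ((x - y) + (u - v))"
      using pair_key[OF assms(2)] by blast
    thus "norm (N (x + u) - N (y + v)) \<le> norm (x + u - (y + v))"
      unfolding NA[OF xu] NA[OF yv] by (simp add: algebra_simps)
  qed
  thus ?thesis using NA by blast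
qed

lemma main_i:
  fixes A :: "('a::real_inner \<times> 'a) set"
  assumes "\<rho> > -1"
  shows "comonotone \<rho> A \<longleftrightarrow> conically_nonexpansive (1 / (2 * (\<rho> + 1))) (ran_id_plus A) (resolvent A)"
proof -
  define \<alpha> where "\<alpha> = 1 / (2 * (\<rho> + 1))"
  have ap: "\<alpha> > 0" using assms by (simp add: \<alpha>_def)
  have a1: "\<alpha> * (2*\<rho>+2) = 1" using assms by (simp add: \<alpha>_def)
  have a2: "\<alpha> * (2*\<rho>+1) = 1 - \<alpha>" using a1 by (simp add: algebra_simps)
  show ?thesis unfolding \<alpha>_def[symmetric]
  proof
    assume com: "comonotone \<rho> A"
    then obtain N where N: "nonexpansive_on (ran_id_plus A) N"
      and NA: "\<And>x u. (x,u) \<in> A \<Longrightarrow> N (x + u) = x - (2*\<rho>+1) *\<^sub>R u"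
      using comon_N[OF _ assms] by blast
    have key: "(1 - \<alpha>) *\<^sub>R (x + u) + \<alpha> *\<^sub>R N (x + u) = x" if "(x,u) \<in> A" for x u
    proof -
      have "(1 - \<alpha>) *\<^sub>R (x + u) + \<alpha> *\<^sub>R N (x + u) = (1 - \<alpha>) *\<^sub>R (x + u) + \<alpha> *\<^sub>R x - (\<alpha> * (2*\<rho>+1)) *\<^sub>R u"
        unfolding NA[OF that] by (simp add: algebra_simps)
      also have "\<dots> = x" unfolding a2 by (simp add: algebra_simps)
      finally show ?thesis .
    qed
    have "resolvent A = {(x, (1 - \<alpha>) *\<^sub>R x + \<alpha> *\<^sub>R N x) | x. x \<in> ran_id_plus A}"
      unfolding resolvent_def ran_id_plus_def using key by fastforce
    thus "conically_nonexpansive \<alpha> (ran_id_plus A) (resolvent A)"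
      unfolding conically_nonexpansive_def using ap N by blast
  next
    assume "conically_nonexpansive \<alpha> (ran_id_plus A) (resolvent A)"
    then obtain N where N: "nonexpansive_on (ran_id_plus A) N"
      and T: "resolvent A = {(x, (1 - \<alpha>) *\<^sub>R x + \<alpha> *\<^sub>R N x) | x. x \<in> ran_id_plus A}"
      unfolding conically_nonexpansive_def by blast
    have NA: "N (x + u) = x - (2*\<rho>+1) *\<^sub>R u" if "(x,u) \<in> A" for x u
    proof -
      have "(x + u, x) \<in> resolvent A" using that unfolding resolvent_def by blast
      hence "x = (1 - \<alpha>) *\<^sub>R (x + u) + \<alpha> *\<^sub>R N (x + u)" using T by auto
      hence "\<alpha> *\<^sub>R N (x + u) = x - (1 - \<alpha>) *\<^sub>R (x + u)" by (simp add: algebra_simps)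
      also have "\<dots> = \<alpha> *\<^sub>R x - (\<alpha> * (2*\<rho>+1)) *\<^sub>R u"
        unfolding a2 by (simp add: algebra_simps)
      also have "\<dots> = \<alpha> *\<^sub>R (x - (2*\<rho>+1) *\<^sub>R u)"
        by (simp add: algebra_simps)
      finally show ?thesis using ap by simp
    qed
    show "comonotone \<rho> A" unfolding comonotone_def
    proof clarify
      fix x u y v assume xu: "(x,u) \<in> A" and yv: "(y,v) \<in> A"
      have "x + u \<in> ran_id_plus A" "y + v \<in> ran_id_plus A" using xu yv unfolding ran_id_plus_def by auto
      hence "norm (N (x + u) - N (y + v)) \<le> norm (x + u - (y + v))"
        using N unfolding nonexpansive_on_def by blast
      hence "norm ((x - y) - (2*\<rho>+1) *\<^sub>R (u - v)) \<le> norm ((x - y) + (u - v))"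
        unfolding NA[OF xu] NA[OF yv] by (simp add: algebra_simps)
      thus "\<rho> * (norm (u - v))\<^sup>2 \<le> inner (x - y) (u - v)"
        using pair_key[OF assms] by blast
    qed
  qed
qed


lemma var_ident:
  fixes f :: "'b \<Rightarrow> 'a::real_inner"
  assumes "finite S" "sum \<mu> S = 1"
  shows "(\<Sum>x\<in>S. \<Sum>y\<in>S. \<mu> x * \<mu> y * (norm (f x - f y))\<^sup>2)
       = 2 * (\<Sum>x\<in>S. \<mu> x * (norm (f x))\<^sup>2) - 2 * (norm (\<Sum>x\<in>S. \<mu> x *\<^sub>R f x))\<^sup>2"
proof -
  have sq: "(norm (f x - f y))\<^sup>2 = (norm (f x))\<^sup>2 + (norm (f y))\<^sup>2 - 2 * inner (f x) (f y)" for x y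
    by (simp add: power2_norm_eq_inner inner_diff_left inner_diff_right inner_commute)
  have n: "(norm (\<Sum>x\<in>S. \<mu> x *\<^sub>R f x))\<^sup>2 = (\<Sum>x\<in>S. \<Sum>y\<in>S. \<mu> x * \<mu> y * inner (f x) (f y))"
    apply (simp add: power2_norm_eq_inner inner_sum_left inner_sum_right sum_distrib_left mult.assoc)
    apply (subst sum.swap)
    apply (simp add: mult_ac)
    done
  have a: "(\<Sum>x\<in>S. \<Sum>y\<in>S. \<mu> x * \<mu> y * (norm (f x))\<^sup>2) = (\<Sum>x\<in>S. \<mu> x * (norm (f x))\<^sup>2)"
  proof -
    have "(\<Sum>x\<in>S. \<Sum>y\<in>S. \<mu> x * \<mu> y * (norm (f x))\<^sup>2) = (\<Sum>x\<in>S. \<mu> x * (norm (f x))\<^sup>2 * (\<Sum>y\<in>S. \<mu> y))"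
      by (simp add: sum_distrib_left sum_distrib_right mult_ac)
    thus ?thesis using assms(2) by simp
  qed
  have b: "(\<Sum>x\<in>S. \<Sum>y\<in>S. \<mu> x * \<mu> y * (norm (f y))\<^sup>2) = (\<Sum>x\<in>S. \<mu> x * (norm (f x))\<^sup>2)"
    using a sum.swap[of "\<lambda>x y. \<mu> x * \<mu> y * (norm (f y))\<^sup>2" S S] by (simp add: mult_ac)
  have "(\<Sum>x\<in>S. \<Sum>y\<in>S. \<mu> x * \<mu> y * (norm (f x - f y))\<^sup>2)
      = (\<Sum>x\<in>S. \<Sum>y\<in>S. \<mu> x * \<mu> y * (norm (f x))\<^sup>2 + \<mu> x * \<mu> y * (norm (f y))\<^sup>2 - 2 * (\<mu> x * \<mu> y * inner (f x) (f y)))"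
    unfolding sq by (simp add: algebra_simps)
  also have "\<dots> = (\<Sum>x\<in>S. \<Sum>y\<in>S. \<mu> x * \<mu> y * (norm (f x))\<^sup>2) + (\<Sum>x\<in>S. \<Sum>y\<in>S. \<mu> x * \<mu> y * (norm (f y))\<^sup>2)
      - 2 * (\<Sum>x\<in>S. \<Sum>y\<in>S. \<mu> x * \<mu> y * inner (f x) (f y))"
    by (simp add: sum.distrib sum_subtractf sum_distrib_left)
  finally show ?thesis unfolding a b n by simp
qed

lemma small_pos:
  fixes k M :: real
  assumes "\<And>t. 0 < t \<Longrightarrow> t \<le> 1 \<Longrightarrow> k \<le> t * M"
  shows "k \<le> 0"
proof (rule ccontr)
  assume "\<not> k \<le> 0" hence k: "k > 0" by simp
  define t where "t = min 1 (k / (2 * (\<bar>M\<bar> + 1)))"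
  have t0: "0 < t" "t \<le> 1" using k by (auto simp: t_def)
  have "t * M \<le> t * \<bar>M\<bar>" using t0 by (simp add: mult_left_mono)
  also have "\<dots> \<le> (k / (2 * (\<bar>M\<bar> + 1))) * \<bar>M\<bar>" by (rule mult_right_mono) (auto simp: t_def)
  also have "\<dots> < k"
  proof -
    have "(k / (2 * (\<bar>M\<bar> + 1))) * \<bar>M\<bar> = k * (\<bar>M\<bar> / (2 * (\<bar>M\<bar> + 1)))" by simp
    also have "\<dots> < k * 1" using k by (intro mult_strict_left_mono) (auto simp: field_simps)
    finally show ?thesis by simp
  qed
  finally show False using assms[OF t0] by simp
qed

lemma R_bound:
  fixes N :: "'a::real_inner \<Rightarrow> 'a"
  assumes "finite S" "\<forall>x\<in>S. \<forall>y\<in>S. norm (N x - N y) \<le> norm (x - y)"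
    and "\<forall>x\<in>S. 0 \<le> \<mu> x" "sum \<mu> S = 1"
  shows "(\<Sum>x\<in>S. \<mu> x * ((norm (N x))\<^sup>2 - (norm (z - x))\<^sup>2)) \<le> (norm (\<Sum>x\<in>S. \<mu> x *\<^sub>R N x))\<^sup>2"
proof -
  define a where "a = (\<Sum>x\<in>S. \<mu> x *\<^sub>R N x)"
  define xb where "xb = (\<Sum>x\<in>S. \<mu> x *\<^sub>R x)"
  have "(\<Sum>x\<in>S. \<Sum>y\<in>S. \<mu> x * \<mu> y * (norm (N x - N y))\<^sup>2) \<le> (\<Sum>x\<in>S. \<Sum>y\<in>S. \<mu> x * \<mu> y * (norm (x - y))\<^sup>2)"
    using assms(2,3) by (intro sum_mono mult_left_mono power_mono) auto
  hence v: "(\<Sum>x\<in>S. \<mu> x * (norm (N x))\<^sup>2) - (norm a)\<^sup>2 \<le> (\<Sum>x\<in>S. \<mu> x * (norm x)\<^sup>2) - (norm xb)\<^sup>2"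
    unfolding var_ident[OF assms(1,4), of N] var_ident[OF assms(1,4), of "\<lambda>x. x"] a_def xb_def by simp
  have zx: "(\<Sum>x\<in>S. \<mu> x * (norm (z - x))\<^sup>2) = (norm z)\<^sup>2 - 2 * inner z xb + (\<Sum>x\<in>S. \<mu> x * (norm x)\<^sup>2)"
  proof -
    have "(\<Sum>x\<in>S. \<mu> x * (norm (z - x))\<^sup>2) = (\<Sum>x\<in>S. \<mu> x * (norm z)\<^sup>2 - 2 * (\<mu> x * inner z x) + \<mu> x * (norm x)\<^sup>2)"
      by (intro sum.cong refl) (simp add: power2_norm_eq_inner inner_diff_left inner_diff_right inner_commute algebra_simps)
    also have "\<dots> = (\<Sum>x\<in>S. \<mu> x) * (norm z)\<^sup>2 - 2 * (\<Sum>x\<in>S. \<mu> x * inner z x) + (\<Sum>x\<in>S. \<mu> x * (norm x)\<^sup>2)"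
      by (simp add: sum.distrib sum_subtractf sum_distrib_left sum_distrib_right)
    also have "(\<Sum>x\<in>S. \<mu> x * inner z x) = inner z xb"
      by (simp add: xb_def inner_sum_right)
    finally show ?thesis using assms(4) by simp
  qed
  have zxb: "(norm (z - xb))\<^sup>2 = (norm z)\<^sup>2 - 2 * inner z xb + (norm xb)\<^sup>2"
    by (simp add: power2_norm_eq_inner inner_diff_left inner_diff_right inner_commute)
  have "(\<Sum>x\<in>S. \<mu> x * ((norm (N x))\<^sup>2 - (norm (z - x))\<^sup>2))
      = (\<Sum>x\<in>S. \<mu> x * (norm (N x))\<^sup>2) - (\<Sum>x\<in>S. \<mu> x * (norm (z - x))\<^sup>2)"
    by (simp add: right_diff_distrib sum_subtractf)
  also have "\<dots> \<le> (norm a)\<^sup>2 - (norm (z - xb))\<^sup>2" using v zx zxb by linarith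
  also have "\<dots> \<le> (norm a)\<^sup>2" by simp
  finally show ?thesis unfolding a_def .
qed

lemma finite_ext:
  fixes N :: "'a::real_inner \<Rightarrow> 'a"
  assumes "finite S" "S \<noteq> {}" "\<forall>x\<in>S. \<forall>y\<in>S. norm (N x - N y) \<le> norm (x - y)"
  shows "\<exists>w. \<forall>x\<in>S. norm (w - N x) \<le> norm (z - x)"
proof -
  define c where "c x = (norm (N x))\<^sup>2 - (norm (z - x))\<^sup>2" for x
  define b where "b x = (N x, c x)" for x
  define R where "R = {(\<Sum>x\<in>S. \<mu> x *\<^sub>R N x, \<Sum>x\<in>S. \<mu> x * c x) | \<mu>. (\<forall>x\<in>S. 0 \<le> \<mu> x) \<and> sum \<mu> S = 1}"
  define K where "K = convex hull (b ` S)"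
  have bR: "b ` S \<subseteq> R"
  proof (rule image_subsetI)
    fix x0 assume x0: "x0 \<in> S"
    define \<mu> where "\<mu> x = (if x = x0 then 1 else 0 :: real)" for x
    have m3: "(\<Sum>x\<in>S. \<mu> x *\<^sub>R N x) = N x0" "(\<Sum>x\<in>S. \<mu> x * c x) = c x0" "sum \<mu> S = 1"
    proof -
      have e1: "(\<lambda>x. \<mu> x *\<^sub>R N x) = (\<lambda>x. if x = x0 then N x else 0)"
        and e2: "(\<lambda>x. \<mu> x * c x) = (\<lambda>x. if x = x0 then c x else 0)"
        by (auto simp: \<mu>_def)
      show "(\<Sum>x\<in>S. \<mu> x *\<^sub>R N x) = N x0" "(\<Sum>x\<in>S. \<mu> x * c x) = c x0" "sum \<mu> S = 1"
        using x0 assms(1) unfolding e1 e2 by (simp_all add: sum.delta \<mu>_def)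
    qed
    have m4: "\<forall>x\<in>S. 0 \<le> \<mu> x" by (simp add: \<mu>_def)
    have "b x0 = (\<Sum>x\<in>S. \<mu> x *\<^sub>R N x, \<Sum>x\<in>S. \<mu> x * c x) \<and> (\<forall>x\<in>S. 0 \<le> \<mu> x) \<and> sum \<mu> S = 1"
      unfolding b_def m3 using m4 by simp
    thus "b x0 \<in> R" unfolding R_def by blast
  qed
  have cR: "convex R" unfolding convex_def
  proof (intro ballI allI impI)
    fix p q and u v :: real assume p: "p \<in> R" and q: "q \<in> R" and uv: "0 \<le> u" "0 \<le> v" "u + v = 1"
    obtain \<mu> where \<mu>: "\<forall>x\<in>S. 0 \<le> \<mu> x" "sum \<mu> S = 1" "p = (\<Sum>x\<in>S. \<mu> x *\<^sub>R N x, \<Sum>x\<in>S. \<mu> x * c x)"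
      using p unfolding R_def by blast
    obtain \<nu> where \<nu>: "\<forall>x\<in>S. 0 \<le> \<nu> x" "sum \<nu> S = 1" "q = (\<Sum>x\<in>S. \<nu> x *\<^sub>R N x, \<Sum>x\<in>S. \<nu> x * c x)"
      using q unfolding R_def by blast
    define lam where "lam x = u * \<mu> x + v * \<nu> x" for x
    have "\<forall>x\<in>S. 0 \<le> lam x" using \<mu> \<nu> uv by (simp add: lam_def)
    moreover have "sum lam S = 1" using \<mu> \<nu> uv by (simp add: lam_def sum.distrib sum_distrib_left[symmetric])
    moreover have "u *\<^sub>R p + v *\<^sub>R q = (\<Sum>x\<in>S. lam x *\<^sub>R N x, \<Sum>x\<in>S. lam x * c x)"
    proof -
      have "(\<Sum>x\<in>S. lam x *\<^sub>R N x) = u *\<^sub>R (\<Sum>x\<in>S. \<mu> x *\<^sub>R N x) + v *\<^sub>R (\<Sum>x\<in>S. \<nu> x *\<^sub>R N x)"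
        by (simp add: lam_def scaleR_add_left sum.distrib scaleR_sum_right)
      moreover have "(\<Sum>x\<in>S. lam x * c x) = u * (\<Sum>x\<in>S. \<mu> x * c x) + v * (\<Sum>x\<in>S. \<nu> x * c x)"
        by (simp add: lam_def distrib_right sum.distrib sum_distrib_left mult.assoc)
      ultimately show ?thesis using \<mu>(3) \<nu>(3) by simp
    qed
    ultimately show "u *\<^sub>R p + v *\<^sub>R q \<in> R" unfolding R_def by blast
  qed
  have KR: "K \<subseteq> R" unfolding K_def using bR cR by (rule hull_minimal)
  have Rb: "snd p \<le> (norm (fst p))\<^sup>2" if "p \<in> R" for p
    using that R_bound[OF assms(1,3), of _ z] unfolding R_def c_def by auto
  have Kc: "compact K" unfolding K_def using assms(1) by (simp add: finite_imp_compact_convex_hull)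
  have Kne: "K \<noteq> {}" unfolding K_def using assms(2) by simp
  have "continuous_on K (\<lambda>p. snd p - (norm (fst p))\<^sup>2)" by (intro continuous_intros)
  then obtain p where pK: "p \<in> K" and pmax: "\<And>q. q \<in> K \<Longrightarrow> snd q - (norm (fst q))\<^sup>2 \<le> snd p - (norm (fst p))\<^sup>2"
    using continuous_attains_sup[OF Kc Kne] by blast
  define a where "a = fst p"
  define s where "s = snd p"
  have sa: "s \<le> (norm a)\<^sup>2" using Rb KR pK unfolding a_def s_def by blast
  show ?thesis
  proof (intro exI ballI)
    fix x assume x: "x \<in> S"
    have bK: "b x \<in> K" unfolding K_def using x by (simp add: hull_inc)
    define d where "d = N x - a"
    have "c x - s - 2 * inner a d \<le> t * (norm d)\<^sup>2" if t: "0 < t" "t \<le> 1" for t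
    proof -
      have "(1 - t) *\<^sub>R p + t *\<^sub>R b x \<in> K"
        using pK bK t unfolding K_def by (intro convexD) (auto simp: convex_convex_hull)
      note pm = pmax[OF this]
      have f1: "fst ((1 - t) *\<^sub>R p + t *\<^sub>R b x) = a + t *\<^sub>R d"
        by (simp add: a_def d_def b_def scaleR_diff_left scaleR_diff_right)
      have f2: "snd ((1 - t) *\<^sub>R p + t *\<^sub>R b x) = (1 - t) * s + t * c x"
        by (simp add: s_def b_def)
      have "(1 - t) * s + t * c x - (norm (a + t *\<^sub>R d))\<^sup>2 \<le> s - (norm a)\<^sup>2"
        using pm unfolding f1 f2 a_def[symmetric] s_def[symmetric] .
      moreover have "(norm (a + t *\<^sub>R d))\<^sup>2 = (norm a)\<^sup>2 + 2 * t * inner a d + t\<^sup>2 * (norm d)\<^sup>2"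
        unfolding power2_norm_eq_inner
        by (simp add: inner_add_left inner_add_right inner_commute[of d a] power2_eq_square distrib_left mult.assoc)
      moreover have "t * (c x - s - 2 * inner a d) - t * (t * (norm d)\<^sup>2) = 
          ((1 - t) * s + t * c x - ((norm a)\<^sup>2 + 2 * t * inner a d + t\<^sup>2 * (norm d)\<^sup>2)) - (s - (norm a)\<^sup>2)"
        by (simp add: ring_distribs power2_eq_square)
      ultimately have "t * (c x - s - 2 * inner a d) \<le> t * (t * (norm d)\<^sup>2)"
        by linarith
      thus ?thesis using t by simp
    qed
    hence k: "c x - s - 2 * inner a d \<le> 0" by (intro small_pos) (auto simp: mult.commute)
    have "(norm (a - N x))\<^sup>2 = (norm (N x))\<^sup>2 - 2 * inner a (N x) + (norm a)\<^sup>2"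
      by (simp add: power2_norm_eq_inner inner_diff_left inner_diff_right inner_commute)
    moreover have "inner a d = inner a (N x) - (norm a)\<^sup>2"
      by (simp add: d_def inner_diff_right power2_norm_eq_inner)
    ultimately have "(norm (a - N x))\<^sup>2 \<le> (norm (z - x))\<^sup>2"
      using k sa unfolding c_def by linarith
    thus "norm (a - N x) \<le> norm (z - x)" by (rule power2_le_imp_le) simp
  qed
qed


lemma eps_idx:
  fixes e :: real assumes "e > 0"
  shows "\<exists>M. \<forall>n\<ge>M. 8 / real (Suc n) < e\<^sup>2"
proof -
  have "e\<^sup>2 / 8 > 0" using assms by simp
  then obtain M where M: "inverse (real (Suc M)) < e\<^sup>2 / 8" using reals_Archimedean by blast
  have "8 / real (Suc n) < e\<^sup>2" if "n \<ge> M" for n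
  proof -
    have "inverse (real (Suc n)) \<le> inverse (real (Suc M))" using that by (simp add: le_imp_inverse_le)
    hence "inverse (real (Suc n)) < e\<^sup>2 / 8" using M by linarith
    thus ?thesis by (simp add: field_simps)
  qed
  thus ?thesis by blast
qed

lemma cauchy_8:
  fixes X :: "nat \<Rightarrow> 'a::real_normed_vector"
  assumes "\<And>n m. n \<le> m \<Longrightarrow> (norm (X n - X m))\<^sup>2 \<le> 8 / real (Suc n)"
  shows "Cauchy X"
proof (rule CauchyI)
  fix e :: real assume e: "e > 0"
  then obtain M where M: "\<forall>n\<ge>M. 8 / real (Suc n) < e\<^sup>2" using eps_idx by blast
  have "norm (X m - X n) < e" if "m \<ge> M" "n \<ge> M" for m n
  proof (cases "m \<le> n")
    case True
    hence "(norm (X m - X n))\<^sup>2 < e\<^sup>2" using assms[OF True] M that by fastforce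
    thus ?thesis using e by (simp add: power2_less_imp_less)
  next
    case False
    hence "(norm (X n - X m))\<^sup>2 < e\<^sup>2" using assms[of n m] M that by fastforce
    thus ?thesis using e by (simp add: power2_less_imp_less norm_minus_commute)
  qed
  thus "\<exists>M. \<forall>m\<ge>M. \<forall>n\<ge>M. norm (X m - X n) < e" by blast
qed

lemma null_8:
  fixes X :: "nat \<Rightarrow> 'a::real_normed_vector"
  assumes "\<And>n. (norm (X n))\<^sup>2 \<le> 8 / real (Suc n)"
  shows "X \<longlonglongrightarrow> 0"
proof (rule LIMSEQ_I)
  fix e :: real assume e: "e > 0"
  then obtain M where M: "\<forall>n\<ge>M. 8 / real (Suc n) < e\<^sup>2" using eps_idx by blast
  have "norm (X n - 0) < e" if "n \<ge> M" for n
  proof -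
    have "(norm (X n))\<^sup>2 < e\<^sup>2" using assms[of n] M that by fastforce
    thus ?thesis using e by (simp add: power2_less_imp_less)
  qed
  thus "\<exists>M. \<forall>n\<ge>M. norm (X n - 0) < e" by blast
qed

lemma fip:
  fixes K0 :: "'a::{real_inner,complete_space} set" and CC :: "'a set set"
  assumes cc: "\<And>C. C \<in> CC \<Longrightarrow> closed C \<and> convex C"
    and K0: "closed K0" "convex K0" "bounded K0"
    and fin: "\<And>F. finite F \<Longrightarrow> F \<subseteq> CC \<Longrightarrow> \<Inter>F \<inter> K0 \<noteq> {}"
  shows "\<Inter>CC \<inter> K0 \<noteq> {}"
proof -
  define Cf where "Cf F = \<Inter>F \<inter> K0" for F
  define d where "d F = Inf ((\<lambda>w. (norm w)\<^sup>2) ` Cf F)" for F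
  define Fin where "Fin = {F. finite F \<and> F \<subseteq> CC}"
  obtain M where M: "\<And>w. w \<in> K0 \<Longrightarrow> norm w \<le> M" using bounded_iff K0(3) by blast
  have Cne: "Cf F \<noteq> {}" if "F \<in> Fin" for F using fin that unfolding Cf_def Fin_def by blast
  have bb: "bdd_below ((\<lambda>w. (norm w)\<^sup>2) ` Cf F)" for F by (rule bdd_belowI[of _ 0]) auto
  have dle: "d F \<le> (norm w)\<^sup>2" if "w \<in> Cf F" for F w
    unfolding d_def using that bb by (intro cInf_lower) auto
  have dM: "d F \<le> M\<^sup>2" if FF: "F \<in> Fin" for F
  proof -
    obtain w where w: "w \<in> Cf F" using Cne[OF FF] by blast
    hence "norm w \<le> M" using M unfolding Cf_def by blast
    hence "(norm w)\<^sup>2 \<le> M\<^sup>2" by (simp add: power_mono)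
    thus ?thesis using dle[OF w] by linarith
  qed
  have near: "\<exists>w\<in>Cf F. (norm w)\<^sup>2 < d F + e" if "F \<in> Fin" "e > 0" for F e
  proof -
    have ne': "(\<lambda>w. (norm w)\<^sup>2) ` Cf F \<noteq> {}" using Cne[OF that(1)] by simp
    have "Inf ((\<lambda>w. (norm w)\<^sup>2) ` Cf F) < d F + e" using that(2) unfolding d_def by simp
    hence "\<exists>v\<in>(\<lambda>w. (norm w)\<^sup>2) ` Cf F. v < d F + e" by (simp only: cInf_less_iff[OF ne' bb])
    thus ?thesis by blast
  qed
  have Cmono: "Cf G \<subseteq> Cf F" if "F \<subseteq> G" for F G using that unfolding Cf_def by blast
  have mono: "d F \<le> d G" if "F \<subseteq> G" "G \<in> Fin" for F G
    unfolding d_def using Cne[OF that(2)] Cmono[OF that(1)] bb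
    by (intro cInf_superset_mono) auto
  have conv: "convex (Cf F)" if "F \<subseteq> CC" for F
    unfolding Cf_def using that cc K0(2) by (intro convex_Int convex_Inter) auto
  have para: "(norm (x - y))\<^sup>2 \<le> 2 * (norm x)\<^sup>2 + 2 * (norm y)\<^sup>2 - 4 * d F"
    if "F \<subseteq> CC" "x \<in> Cf F" "y \<in> Cf F" for F x y
  proof -
    have "(1/2) *\<^sub>R x + (1/2) *\<^sub>R y \<in> Cf F" using conv[OF that(1)] that(2,3) by (intro convexD) auto
    hence "d F \<le> (norm ((1/2) *\<^sub>R x + (1/2) *\<^sub>R y))\<^sup>2" by (rule dle)
    also have "\<dots> = (norm (x + y))\<^sup>2 / 4"
    proof -
      have "(1/2) *\<^sub>R x + (1/2) *\<^sub>R y = (1/2) *\<^sub>R (x + y)" by (simp add: scaleR_add_right)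
      thus ?thesis by (simp add: power_mult_distrib power2_eq_square)
    qed
    finally have "4 * d F \<le> (norm (x + y))\<^sup>2" by simp
    moreover have "(norm (x - y))\<^sup>2 + (norm (x + y))\<^sup>2 = 2 * (norm x)\<^sup>2 + 2 * (norm y)\<^sup>2"
      unfolding power2_norm_eq_inner
      by (simp add: inner_add_left inner_add_right inner_diff_left inner_diff_right inner_commute[of y x])
    ultimately show ?thesis by linarith
  qed
  define s where "s = Sup (d ` Fin)"
  have Finne: "{} \<in> Fin" unfolding Fin_def by simp
  have bda: "bdd_above (d ` Fin)" using dM by (intro bdd_aboveI[of _ "M\<^sup>2"]) auto
  have ds: "d F \<le> s" if "F \<in> Fin" for F unfolding s_def using that bda by (intro cSup_upper) auto
  have "\<forall>n. \<exists>F. F \<in> Fin \<and> s - 1 / real (Suc n) < d F"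
  proof
    fix n
    have ne': "d ` Fin \<noteq> {}" using Finne by blast
    have "s - 1 / real (Suc n) < Sup (d ` Fin)" unfolding s_def by simp
    hence "\<exists>v\<in>d ` Fin. s - 1 / real (Suc n) < v" by (simp only: less_cSup_iff[OF ne' bda])
    thus "\<exists>F. F \<in> Fin \<and> s - 1 / real (Suc n) < d F" by blast
  qed
  from choice[OF this] obtain Fs where Fs: "\<And>n. Fs n \<in> Fin \<and> s - 1 / real (Suc n) < d (Fs n)" by blast
  define G where "G n = \<Union>(Fs ` {..n})" for n
  have GFin: "G n \<in> Fin" for n using Fs unfolding G_def Fin_def by auto
  have GCC: "G n \<subseteq> CC" for n using GFin unfolding Fin_def by blast
  have Gmono: "G n \<subseteq> G m" if "n \<le> m" for n m using that unfolding G_def by (auto intro: le_trans)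
  have dG: "s - 1 / real (Suc n) < d (G n)" for n
  proof -
    have "Fs n \<subseteq> G n" unfolding G_def by auto
    hence "d (Fs n) \<le> d (G n)" using GFin by (intro mono)
    thus ?thesis using Fs[of n] by linarith
  qed
  have "\<forall>n. \<exists>w. w \<in> Cf (G n) \<and> (norm w)\<^sup>2 < d (G n) + 1 / real (Suc n)"
  proof
    fix n :: nat have "1 / real (Suc n) > 0" by simp
    from near[OF GFin this] show "\<exists>w. w \<in> Cf (G n) \<and> (norm w)\<^sup>2 < d (G n) + 1 / real (Suc n)" by blast
  qed
  from choice[OF this] obtain x where x: "\<And>n. x n \<in> Cf (G n) \<and> (norm (x n))\<^sup>2 < d (G n) + 1 / real (Suc n)" by blast
  have key: "(norm (x n - y))\<^sup>2 \<le> 8 / real (Suc n)"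
    if "y \<in> Cf (G n)" "(norm y)\<^sup>2 < s + 1 / real (Suc n)" for n y
  proof -
    have "(norm (x n - y))\<^sup>2 \<le> 2 * (norm (x n))\<^sup>2 + 2 * (norm y)\<^sup>2 - 4 * d (G n)"
      using para[OF GCC] x that(1) by blast
    moreover have "d (G n) \<le> s" using ds GFin by blast
    moreover have "1 / real (Suc n) > 0" by simp
    moreover have "8 / real (Suc n) = 8 * (1 / real (Suc n))" by simp
    ultimately show ?thesis using conjunct2[OF x[of n]] dG[of n] that(2) by linarith
  qed
  have xs: "(norm (x n))\<^sup>2 < s + 1 / real (Suc n)" for n
    using conjunct2[OF x[of n]] ds[OF GFin, of n] by linarith
  have "Cauchy x"
  proof (rule cauchy_8)
    fix n m :: nat assume nm: "n \<le> m"
    have "x m \<in> Cf (G n)" using x[of m] Cmono[OF Gmono[OF nm]] by blast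
    moreover have "1 / real (Suc m) \<le> 1 / real (Suc n)" using nm by (simp add: frac_le)
    moreover have "(norm (x m))\<^sup>2 < s + 1 / real (Suc n)" using xs[of m] calculation(2) by linarith
    ultimately show "(norm (x n - x m))\<^sup>2 \<le> 8 / real (Suc n)" using key by blast
  qed
  then obtain p where p: "x \<longlonglongrightarrow> p" using Cauchy_convergent_iff convergent_def by blast
  have xK: "x n \<in> K0" for n using conjunct1[OF x[of n]] unfolding Cf_def by blast
  have pK: "p \<in> K0" by (rule closed_sequentially[OF K0(1) xK p])
  have pB: "p \<in> B" if B: "B \<in> CC" for B
  proof -
    define H where "H n = insert B (G n)" for n
    have HFin: "H n \<in> Fin" for n using GFin B unfolding H_def Fin_def by auto
    have "\<forall>n. \<exists>w. w \<in> Cf (H n) \<and> (norm w)\<^sup>2 < d (H n) + 1 / real (Suc n)"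
    proof
      fix n :: nat have "1 / real (Suc n) > 0" by simp
      from near[OF HFin this] show "\<exists>w. w \<in> Cf (H n) \<and> (norm w)\<^sup>2 < d (H n) + 1 / real (Suc n)" by blast
    qed
    from choice[OF this] obtain y where y: "\<And>n. y n \<in> Cf (H n) \<and> (norm (y n))\<^sup>2 < d (H n) + 1 / real (Suc n)" by blast
    have yH: "y n \<in> Cf (H n)" for n using conjunct1[OF y[of n]] .
    have yB: "y n \<in> B" for n using yH[of n] unfolding Cf_def H_def by simp
    have GH: "G n \<subseteq> H n" for n unfolding H_def by (rule subset_insertI)
    have yG: "y n \<in> Cf (G n)" for n using Cmono[OF GH[of n]] yH[of n] by (rule subsetD)
    have ys: "(norm (y n))\<^sup>2 < s + 1 / real (Suc n)" for n using conjunct2[OF y[of n]] ds[OF HFin, of n] by linarith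
    have "(\<lambda>n. x n - y n) \<longlonglongrightarrow> 0" by (rule null_8) (rule key[OF yG ys])
    hence "(\<lambda>n. x n - (x n - y n)) \<longlonglongrightarrow> p - 0" using p by (intro tendsto_diff)
    hence "y \<longlonglongrightarrow> p" by simp
    have "closed B" using cc[OF B] by simp
    thus "p \<in> B" using yB \<open>y \<longlonglongrightarrow> p\<close> by (rule closed_sequentially)
  qed
  show ?thesis using pK pB by blast
qed


lemma cball_iff: "w \<in> cball c r \<longleftrightarrow> norm (w - c) \<le> r"
  by (simp only: mem_cball dist_norm norm_minus_commute)

lemma ext_point:
  fixes N :: "'a::{real_inner,complete_space} \<Rightarrow> 'a"
  assumes "D \<noteq> {}" "nonexpansive_on D N"
  shows "\<exists>w. \<forall>y\<in>D. norm (w - N y) \<le> norm (z - y)"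
proof -
  obtain y0 where y0: "y0 \<in> D" using assms(1) by blast
  define CC where "CC = (\<lambda>y. cball (N y) (norm (z - y))) ` D"
  define K0 where "K0 = cball (N y0) (norm (z - y0))"
  have "\<Inter>CC \<inter> K0 \<noteq> {}"
  proof (rule fip)
    fix C assume "C \<in> CC"
    then obtain y where "C = cball (N y) (norm (z - y))" unfolding CC_def by blast
    thus "closed C \<and> convex C" by simp
  next
    show "closed K0" "convex K0" "bounded K0" unfolding K0_def by simp_all
  next
    fix F assume F: "finite F" "F \<subseteq> CC"
    obtain S where S: "S \<subseteq> D" "finite S" "F = (\<lambda>y. cball (N y) (norm (z - y))) ` S"
      using finite_subset_image[OF F(1) F(2)[unfolded CC_def]] by blast
    have "\<forall>x\<in>insert y0 S. \<forall>y\<in>insert y0 S. norm (N x - N y) \<le> norm (x - y)"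
      using assms(2) S(1) y0 unfolding nonexpansive_on_def by blast
    then obtain w where w: "\<forall>y\<in>insert y0 S. norm (w - N y) \<le> norm (z - y)"
      using finite_ext[of "insert y0 S" N z] S(2) by blast
    have "w \<in> K0" unfolding K0_def cball_iff using w by blast
    moreover have "w \<in> \<Inter>F"
    proof
      fix C assume "C \<in> F"
      then obtain y where y: "y \<in> S" "C = cball (N y) (norm (z - y))" using S(3) by blast
      show "w \<in> C" unfolding y(2) cball_iff using w y(1) by blast
    qed
    ultimately show "\<Inter>F \<inter> K0 \<noteq> {}" by blast
  qed
  then obtain w where w: "w \<in> \<Inter>CC" by blast
  have "norm (w - N y) \<le> norm (z - y)" if "y \<in> D" for y
  proof -
    have "cball (N y) (norm (z - y)) \<in> CC" unfolding CC_def using that by blast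
    hence "w \<in> cball (N y) (norm (z - y))" using w by blast
    thus ?thesis unfolding cball_iff .
  qed
  thus ?thesis by blast
qed

lemma main_ii:
  fixes A :: "('a::{real_inner,complete_space} \<times> 'a) set"
  assumes "\<rho> > -1" "Domain A \<noteq> {}"
  shows "max_comonotone \<rho> A \<longleftrightarrow> comonotone \<rho> A \<and> ran_id_plus A = UNIV"
proof
  assume m: "max_comonotone \<rho> A"
  hence com: "comonotone \<rho> A" unfolding max_comonotone_def by blast
  then obtain N where N: "nonexpansive_on (ran_id_plus A) N"
    and NA: "\<And>x u. (x,u) \<in> A \<Longrightarrow> N (x + u) = x - (2*\<rho>+1) *\<^sub>R u"
    using comon_N[OF _ assms(1)] by blast
  have Dne: "ran_id_plus A \<noteq> {}" using assms(2) unfolding ran_id_plus_def by auto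
  have "z \<in> ran_id_plus A" for z
  proof -
    obtain w where w: "\<And>y. y \<in> ran_id_plus A \<Longrightarrow> norm (w - N y) \<le> norm (z - y)"
      using ext_point[OF Dne N] by blast
    define c where "c = 2*\<rho>+1"
    have c1: "1 + c \<noteq> 0" using assms(1) by (simp add: c_def)
    define q where "q = (1 / (1 + c)) *\<^sub>R (z - w)"
    define p where "p = z - q"
    have pq1: "p + q = z" by (simp add: p_def)
    have "(1 + c) *\<^sub>R q = z - w" using c1 by (simp add: q_def)
    hence pq2: "p - c *\<^sub>R q = w" by (simp add: p_def algebra_simps)
    have pk: "\<rho> * (norm (q - u))\<^sup>2 \<le> inner (p - x) (q - u)" if "(x,u) \<in> A" for x u
    proof -
      have "(p - x) - c *\<^sub>R (q - u) = w - N (x + u)"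
        unfolding NA[OF that] pq2[symmetric] by (simp add: c_def algebra_simps)
      note e1 = this
      have e2: "(p - x) + (q - u) = z - (x + u)" using pq1 by (simp add: algebra_simps)
      have "x + u \<in> ran_id_plus A" using that unfolding ran_id_plus_def by blast
      hence "norm (w - N (x + u)) \<le> norm (z - (x + u))" by (rule w)
      hence "norm ((p - x) - c *\<^sub>R (q - u)) \<le> norm ((p - x) + (q - u))"
        unfolding e1 e2 .
      thus ?thesis using pair_key[OF assms(1)] unfolding c_def by blast
    qed
    have "comonotone \<rho> (insert (p,q) A)"
      unfolding comonotone_def
    proof (intro allI impI)
      fix x u y v assume xu: "(x,u) \<in> insert (p,q) A" and yv: "(y,v) \<in> insert (p,q) A"
      show "\<rho> * (norm (u - v))\<^sup>2 \<le> inner (x - y) (u - v)"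
      proof (cases "(x,u) = (p,q)"; cases "(y,v) = (p,q)")
        assume "(x,u) = (p,q)" "(y,v) = (p,q)" thus ?thesis by simp
      next
        assume "(x,u) = (p,q)" "(y,v) \<noteq> (p,q)" thus ?thesis using pk yv by auto
      next
        assume a: "(x,u) \<noteq> (p,q)" "(y,v) = (p,q)"
        hence "(x,u) \<in> A" using xu by auto
        from pk[OF this] have "\<rho> * (norm (u - q))\<^sup>2 \<le> inner (x - p) (u - q)"
          by (metis inner_minus_left inner_minus_right minus_diff_eq minus_minus norm_minus_commute)
        thus ?thesis using a by simp
      next
        assume "(x,u) \<noteq> (p,q)" "(y,v) \<noteq> (p,q)"
        thus ?thesis using xu yv com unfolding comonotone_def by auto
      qed
    qed
    hence "insert (p,q) A = A" using m unfolding max_comonotone_def by blast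
    hence "(p,q) \<in> A" by blast
    thus ?thesis using pq1 unfolding ran_id_plus_def by blast
  qed
  thus "comonotone \<rho> A \<and> ran_id_plus A = UNIV" using com by blast
next
  assume a: "comonotone \<rho> A \<and> ran_id_plus A = UNIV"
  show "max_comonotone \<rho> A" unfolding max_comonotone_def
  proof (intro conjI allI impI)
    show "comonotone \<rho> A" using a by blast
    fix B assume B: "comonotone \<rho> B \<and> A \<subseteq> B"
    show "B = A"
    proof
      show "B \<subseteq> A"
      proof clarify
        fix y v assume yv: "(y,v) \<in> B"
        have "y + v \<in> ran_id_plus A" using a by simp
        then obtain x u where xu: "(x,u) \<in> A" "y + v = x + u" unfolding ran_id_plus_def by blast
        hence "y = x \<and> v = u" using uniq[of \<rho> B y v x u] B yv assms(1) by blast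
        thus "(y,v) \<in> A" using xu by simp
      qed
    qed (use B in blast)
  qed
qed

theorem proposition3p13:
  fixes A :: "('a::{real_inner, complete_space} \<times> 'a) set"
    and \<rho> :: real
  assumes "Domain A \<noteq> {}"
    and "\<rho> > -1"
  defines "D \<equiv> ran_id_plus A"
    and "T \<equiv> resolvent A"
    and "\<alpha> \<equiv> 1 / (2 * (\<rho> + 1))"
  shows "(comonotone \<rho> A \<longleftrightarrow> conically_nonexpansive (1 / (2 * (\<rho> + 1))) D T)
    \<and> (max_comonotone \<rho> A \<longleftrightarrow> conically_nonexpansive \<alpha> D T \<and> D = UNIV)
    \<and> (comonotone (-1/2) A \<longleftrightarrow> nonexpansive_op D T)
    \<and> (max_comonotone (-1/2) A \<longleftrightarrow> nonexpansive_op D T \<and> D = UNIV)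
    \<and> (comonotone \<rho> A \<and> \<rho> > -1/2 \<longleftrightarrow> averaged \<alpha> D T)
    \<and> (max_comonotone \<rho> A \<and> \<rho> > -1/2 \<longleftrightarrow> averaged \<alpha> D T \<and> D = UNIV)"
proof -
  have i: "comonotone \<rho> A \<longleftrightarrow> conically_nonexpansive \<alpha> D T"
    unfolding D_def T_def \<alpha>_def using main_i[OF assms(2)] .
  have ii: "max_comonotone \<rho> A \<longleftrightarrow> conically_nonexpansive \<alpha> D T \<and> D = UNIV"
    using main_ii[OF assms(2,1)] i unfolding D_def by blast
  have ne: "nonexpansive_op D T \<longleftrightarrow> conically_nonexpansive 1 D T"
    unfolding nonexpansive_op_def conically_nonexpansive_def by simp
  have iii: "comonotone (-1/2) A \<longleftrightarrow> nonexpansive_op D T"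
    using main_i[of "-1/2" A] ne unfolding D_def T_def by simp
  have iv: "max_comonotone (-1/2) A \<longleftrightarrow> nonexpansive_op D T \<and> D = UNIV"
    using main_ii[of "-1/2" A] iii assms(1) unfolding D_def by simp
  have ap: "\<alpha> > 0" using assms(2) by (simp add: \<alpha>_def)
  have "\<alpha> < 1 \<longleftrightarrow> 1 < 2 * (\<rho> + 1)" using assms(2) unfolding \<alpha>_def
    by (simp add: divide_less_eq)
  hence a1: "\<alpha> < 1 \<longleftrightarrow> \<rho> > -1/2" by auto
  have v: "comonotone \<rho> A \<and> \<rho> > -1/2 \<longleftrightarrow> averaged \<alpha> D T"
    unfolding averaged_def using i ap a1 by blast
  have vi: "max_comonotone \<rho> A \<and> \<rho> > -1/2 \<longleftrightarrow> averaged \<alpha> D T \<and> D = UNIV"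
    unfolding averaged_def using ii ap a1 by blast
  show ?thesis using i ii iii iv v vi unfolding \<alpha>_def by blast
qed

end
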